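(* Let $r\in\mathbb{R}$. For all integers $n,k \geq 0$, \[ S_{2,r}(n,k) = \sum_{l=0}^k \binom{n}{l} r^l S_2(n-l,k-l). \]
   Context: $S_2(n,k)$ denotes the Stirling numbers of the second kind, given by $\frac{1}{k!}(e^t-1)^k = \sum_{n\ge k} S_2(n,k)\frac{t^n}{n!}$, with $S_2(a,b)=0$ whenever $a<b$ (and $\binom{n}{l}=0$ for $l>n$). For $r\in\mathbb{R}$ and integer $k\ge 0$, the extended Stirling numbers of the second kind $S_{2,r}(n,k)$ are defined by \[ \frac{1}{k!}(e^t-1+rt)^k = \sum_{n=k}^\infty S_{2,r}(n,k)\frac{t^n}{n!}, \] with $S_{2,r}(n,k)=0$ for $n<k$. *)

theory Defs
  imports "HOL-Combinatorics.Stirling" "HOL-Computational_Algebra.Formal_Power_Series"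
begin

definition ext_stirling2 :: "real \<Rightarrow> nat \<Rightarrow> nat \<Rightarrow> real" where
  "ext_stirling2 r n k =
     fact n * fps_nth (fps_const (1 / fact k) * (fps_exp 1 - 1 + fps_const r * fps_X) ^ k) n"

end

theory Submission
  imports Defs
begin

abbreviation EE :: "real fps" where "EE \<equiv> fps_exp 1 - 1"

lemma EE_nth0: "fps_nth EE 0 = 0" by simp

lemma EE_pow0: "fps_nth (EE ^ Suc j) 0 = 0"
  by (simp add: fps_mult_nth)

lemma EE_deriv: "fps_deriv (EE ^ Suc j) = of_nat (Suc j) * EE ^ j * (EE + 1)"
proof -
  have d: "fps_deriv EE = EE + 1" by simp
  have "fps_deriv (EE ^ Suc j) = of_nat (Suc j) * fps_deriv EE * EE ^ (Suc j - 1)"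
    by (rule fps_deriv_power')
  then show ?thesis unfolding d by (simp only: diff_Suc_1 mult_ac)
qed

lemma EE_pow_nth: "fps_nth (EE ^ j) m = fact j * real (Stirling m j) / fact m"
proof (induction j arbitrary: m)
  case 0
  then show ?case by (cases m) auto
next
  case (Suc j)
  note IHj = Suc.IH
  show ?case
  proof (induction m)
    case 0
    then show ?case using EE_pow0[of j] by simp
  next
    case (Suc m)
    have "fps_nth (fps_deriv (EE ^ Suc j)) m = fps_nth (of_nat (Suc j) * EE ^ j * (EE + 1)) m"
      by (simp only: EE_deriv)
    also have "\<dots> = of_nat (Suc j) * (fps_nth (EE ^ Suc j) m + fps_nth (EE ^ j) m)"
    proof -
      have "of_nat (Suc j) * EE ^ j * (EE + 1) = fps_const (real (Suc j)) * (EE ^ Suc j + EE ^ j)"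
      proof -
        have c: "(of_nat (Suc j) :: real fps) = fps_const (real (Suc j))" by (metis fps_of_nat of_nat_Suc)
        show ?thesis unfolding c by (simp only: power_Suc distrib_left distrib_right mult_1_right mult_1_left mult_ac)
      qed
      then show ?thesis by (simp only: fps_mult_left_const_nth fps_add_nth)
    qed
    finally have eq0: "of_nat (m+1) * fps_nth (EE ^ Suc j) (m+1)
        = of_nat (Suc j) * (fps_nth (EE ^ Suc j) m + fps_nth (EE ^ j) m)" by (simp only: fps_deriv_nth)
    have eq: "real (Suc m) * fps_nth (EE ^ Suc j) (Suc m)
        = real (Suc j) * (fps_nth (EE ^ Suc j) m + fps_nth (EE ^ j) m)" using eq0 by (simp only: Suc_eq_plus1)
    have "fps_nth (EE ^ Suc j) (Suc m) = real (Suc j) * (fps_nth (EE ^ Suc j) m + fps_nth (EE ^ j) m) / real (Suc m)"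
      using eq by (simp add: field_simps)
    also have "\<dots> = fact (Suc j) * real (Stirling (Suc m) (Suc j)) / fact (Suc m)"
      unfolding IHj Suc.IH by (simp add: field_simps)
    finally show ?case .
  qed
qed

lemma term_nth:
  "fps_nth (of_nat (k choose l) * (fps_const r * fps_X) ^ l * EE ^ (k - l)) n =
   real (k choose l) * r ^ l * (if n < l then 0 else fact (k-l) * real (Stirling (n-l) (k-l)) / fact (n-l))"
proof -
  have "of_nat (k choose l) * (fps_const r * fps_X) ^ l * EE ^ (k - l)
      = fps_const (real (k choose l) * r ^ l) * (fps_X ^ l * EE ^ (k - l))"
    by (simp add: fps_of_nat power_mult_distrib fps_const_power mult_ac flip: fps_const_mult)
  then show ?thesis
    by (simp only: fps_mult_left_const_nth fps_X_power_mult_nth EE_pow_nth)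
qed

theorem theorem2:
  fixes r :: real and n k :: nat
  shows "ext_stirling2 r n k =
    (\<Sum>l = 0..k. real (n choose l) * r ^ l * real (Stirling (n - l) (k - l)))"
proof -
  have b: "(EE + fps_const r * fps_X) ^ k
     = (\<Sum>l\<le>k. of_nat (k choose l) * (fps_const r * fps_X) ^ l * EE ^ (k - l))"
    by (subst add.commute) (rule binomial_ring)
  have "ext_stirling2 r n k = fact n / fact k *
     (\<Sum>l\<le>k. real (k choose l) * r ^ l * (if n < l then 0 else fact (k-l) * real (Stirling (n-l) (k-l)) / fact (n-l)))"
    unfolding ext_stirling2_def b fps_mult_left_const_nth fps_sum_nth term_nth by simp
  also have "\<dots> = (\<Sum>l\<le>k. fact n / fact k * (real (k choose l) * r ^ l * (if n < l then 0 else fact (k-l) * real (Stirling (n-l) (k-l)) / fact (n-l))))"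
    by (simp add: sum_distrib_left)
  also have "\<dots> = (\<Sum>l\<le>k. real (n choose l) * r ^ l * real (Stirling (n - l) (k - l)))"
  proof (rule sum.cong[OF refl])
    fix l assume l: "l \<in> {..k}"
    show "fact n / fact k * (real (k choose l) * r ^ l * (if n < l then 0 else fact (k-l) * real (Stirling (n-l) (k-l)) / fact (n-l)))
      = real (n choose l) * r ^ l * real (Stirling (n - l) (k - l))"
    proof (cases "n < l")
      case True then show ?thesis by simp
    next
      case False
      then have ln: "l \<le> n" by simp
      from l have lk: "l \<le> k" by simp
      show ?thesis using False
        by (simp add: binomial_fact[OF ln] binomial_fact[OF lk] field_simps)
    qed
  qed
  also have "\<dots> = (\<Sum>l = 0..k. real (n choose l) * r ^ l * real (Stirling (n - l) (k - l)))"
    by (simp add: atLeast0AtMost)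
  finally show ?thesis .
qed

end
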